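(* Let $\alpha_i,\beta_i,\gamma_i,\delta_i\in(0,\pi)$ satisfy $\alpha_i\pm\beta_i\pm\gamma_i\pm\delta_i\not\equiv0\pmod{2\pi}$ for all sign choices, and suppose $M_i>0$. Then $\overline{\alpha}_i,\overline{\beta}_i,\overline{\gamma}_i,\overline{\delta}_i\in(0,\pi)$ and \[r_i,\ s_i,\ f_i,\ (r_i-1)(r_i-M_i),\ (s_i-1)(s_i-M_i),\ (f_i-1)(f_i-M_i),\ (r_i-1)(s_i-1)(f_i-1)(1-M_i)\] are all strictly positive.
   Context: $\sigma_i=(\alpha_i+\beta_i+\gamma_i+\delta_i)/2$, $\overline{\alpha}_i=\sigma_i-\alpha_i$, $\overline{\beta}_i=\sigma_i-\beta_i$, $\overline{\gamma}_i=\sigma_i-\gamma_i$, $\overline{\delta}_i=\sigma_i-\delta_i$; $a_i=\sin\alpha_i/\sin\overline{\alpha}_i$, $b_i=\sin\beta_i/\sin\overline{\beta}_i$, $c_i=\sin\gamma_i/\sin\overline{\gamma}_i$, $d_i=\sin\delta_i/\sin\overline{\delta}_i$, $M_i=a_ib_ic_id_i$, $r_i=a_id_i$, $s_i=c_id_i$, $f_i=a_ic_i$. *)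

theory Defs
  imports Complex_Main
begin

text \<open>Quantities attached to one quadruple of angles (the index i is fixed throughout).\<close>

definition sig :: "real \<Rightarrow> real \<Rightarrow> real \<Rightarrow> real \<Rightarrow> real" where
  "sig \<alpha> \<beta> \<gamma> \<delta> = (\<alpha> + \<beta> + \<gamma> + \<delta>) / 2"

definition aa :: "real \<Rightarrow> real \<Rightarrow> real \<Rightarrow> real \<Rightarrow> real" where
  "aa \<alpha> \<beta> \<gamma> \<delta> = sin \<alpha> / sin (sig \<alpha> \<beta> \<gamma> \<delta> - \<alpha>)"

definition bb :: "real \<Rightarrow> real \<Rightarrow> real \<Rightarrow> real \<Rightarrow> real" where
  "bb \<alpha> \<beta> \<gamma> \<delta> = sin \<beta> / sin (sig \<alpha> \<beta> \<gamma> \<delta> - \<beta>)"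

definition cc :: "real \<Rightarrow> real \<Rightarrow> real \<Rightarrow> real \<Rightarrow> real" where
  "cc \<alpha> \<beta> \<gamma> \<delta> = sin \<gamma> / sin (sig \<alpha> \<beta> \<gamma> \<delta> - \<gamma>)"

definition dd :: "real \<Rightarrow> real \<Rightarrow> real \<Rightarrow> real \<Rightarrow> real" where
  "dd \<alpha> \<beta> \<gamma> \<delta> = sin \<delta> / sin (sig \<alpha> \<beta> \<gamma> \<delta> - \<delta>)"

definition MM :: "real \<Rightarrow> real \<Rightarrow> real \<Rightarrow> real \<Rightarrow> real" where
  "MM \<alpha> \<beta> \<gamma> \<delta> = aa \<alpha> \<beta> \<gamma> \<delta> * bb \<alpha> \<beta> \<gamma> \<delta> * cc \<alpha> \<beta> \<gamma> \<delta> * dd \<alpha> \<beta> \<gamma> \<delta>"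

definition rr :: "real \<Rightarrow> real \<Rightarrow> real \<Rightarrow> real \<Rightarrow> real" where
  "rr \<alpha> \<beta> \<gamma> \<delta> = aa \<alpha> \<beta> \<gamma> \<delta> * dd \<alpha> \<beta> \<gamma> \<delta>"

definition ss :: "real \<Rightarrow> real \<Rightarrow> real \<Rightarrow> real \<Rightarrow> real" where
  "ss \<alpha> \<beta> \<gamma> \<delta> = cc \<alpha> \<beta> \<gamma> \<delta> * dd \<alpha> \<beta> \<gamma> \<delta>"

definition ff :: "real \<Rightarrow> real \<Rightarrow> real \<Rightarrow> real \<Rightarrow> real" where
  "ff \<alpha> \<beta> \<gamma> \<delta> = aa \<alpha> \<beta> \<gamma> \<delta> * cc \<alpha> \<beta> \<gamma> \<delta>"

end

theory Submission
  imports Defs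
begin

lemma ss2:
  fixes x y a b :: real
  assumes "x - y = a \<or> y - x = a" "x + y = b"
  shows "sin x * sin y = (cos a - cos b) / 2"
proof -
  have "cos (x - y) = cos a"
  proof (cases "x - y = a")
    case True then show ?thesis by simp
  next
    case False
    then have "x - y = - a" using assms(1) by linarith
    then show ?thesis by simp
  qed
  then show ?thesis using assms(2) by (simp add: sin_times_sin)
qed

lemma sin_neg_out:
  fixes x :: real
  assumes "- (pi/2) < x" "x < 3*pi/2" "x \<noteq> 0" "x \<noteq> pi" "\<not> (0 < x \<and> x < pi)"
  shows "sin x < 0"
proof (cases "x < 0")
  case True
  have "0 < sin (-x)" using True assms by (intro sin_gt_zero) auto
  then show ?thesis by simp
next
  case False
  then have "pi < x" using assms by auto
  then show ?thesis using assms by (intro sin_lt_zero) auto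
qed

lemma key:
  fixes x y z w :: real
  assumes "- (pi/2) < x" "x < 3*pi/2"
    and "0 < x + y" "0 < x + z" "0 < x + w" "x + y < 2*pi" "x + z < 2*pi" "x + w < 2*pi"
    and "y - x < pi" "x - y < pi" "z - x < pi" "x - z < pi" "w - x < pi" "x - w < pi"
    and "x \<noteq> 0" "x \<noteq> pi"
    and "sin x * (sin y * sin z * sin w) > 0"
  shows "0 < x \<and> x < pi"
proof (rule ccontr)
  assume n: "\<not> (0 < x \<and> x < pi)"
  have sx: "sin x < 0" using sin_neg_out[OF assms(1,2,15,16) n] .
  have "0 < y \<and> y < pi" "0 < z \<and> z < pi" "0 < w \<and> w < pi"
    using n assms by auto
  then have "sin y > 0" "sin z > 0" "sin w > 0" by (auto intro: sin_gt_zero)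
  then have "sin y * sin z * sin w > 0" by simp
  then have "sin x * (sin y * sin z * sin w) < 0" using sx by (simp add: mult_neg_pos)
  then show False using assms(17) by simp
qed

theorem lemma4:
  fixes \<alpha> \<beta> \<gamma> \<delta> :: real
  assumes "\<alpha> \<in> {0<..<pi}" "\<beta> \<in> {0<..<pi}" "\<gamma> \<in> {0<..<pi}" "\<delta> \<in> {0<..<pi}"
    and "\<forall>e1 \<in> {-1, 1::real}. \<forall>e2 \<in> {-1, 1::real}. \<forall>e3 \<in> {-1, 1::real}. \<forall>k::int.
           \<alpha> + e1 * \<beta> + e2 * \<gamma> + e3 * \<delta> \<noteq> 2 * pi * of_int k"
    and "MM \<alpha> \<beta> \<gamma> \<delta> > 0"
  defines "\<sigma> \<equiv> sig \<alpha> \<beta> \<gamma> \<delta>"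
    and "M \<equiv> MM \<alpha> \<beta> \<gamma> \<delta>" and "r \<equiv> rr \<alpha> \<beta> \<gamma> \<delta>"
    and "s \<equiv> ss \<alpha> \<beta> \<gamma> \<delta>" and "f \<equiv> ff \<alpha> \<beta> \<gamma> \<delta>"
  shows "\<sigma> - \<alpha> \<in> {0<..<pi} \<and> \<sigma> - \<beta> \<in> {0<..<pi} \<and> \<sigma> - \<gamma> \<in> {0<..<pi} \<and> \<sigma> - \<delta> \<in> {0<..<pi}
    \<and> r > 0 \<and> s > 0 \<and> f > 0
    \<and> (r - 1) * (r - M) > 0 \<and> (s - 1) * (s - M) > 0 \<and> (f - 1) * (f - M) > 0
    \<and> (r - 1) * (s - 1) * (f - 1) * (1 - M) > 0"
proof -
  have sd: "\<sigma> = (\<alpha>+\<beta>+\<gamma>+\<delta>)/2" unfolding \<sigma>_def sig_def by simp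
  have ne: "\<And>e1 e2 e3 k. e1 \<in> {-1, 1::real} \<Longrightarrow> e2 \<in> {-1, 1::real} \<Longrightarrow> e3 \<in> {-1, 1::real} \<Longrightarrow>
     \<alpha> + e1 * \<beta> + e2 * \<gamma> + e3 * \<delta> \<noteq> 2 * pi * of_int (k::int)"
    using assms(5) by blast
  have r1: "0 < \<alpha>" "\<alpha> < pi" using assms(1) by auto
  have r2: "0 < \<beta>" "\<beta> < pi" using assms(2) by auto
  have r3: "0 < \<gamma>" "\<gamma> < pi" using assms(3) by auto
  have r4: "0 < \<delta>" "\<delta> < pi" using assms(4) by auto
  define A where "A = sin \<alpha>"
  define B where "B = sin \<beta>"
  define C where "C = sin \<gamma>"
  define D where "D = sin \<delta>"
  define Ab where "Ab = sin (\<sigma> - \<alpha>)"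
  define Bb where "Bb = sin (\<sigma> - \<beta>)"
  define Cb where "Cb = sin (\<sigma> - \<gamma>)"
  define Db where "Db = sin (\<sigma> - \<delta>)"
  have Ap: "A > 0" unfolding A_def using r1 by (rule sin_gt_zero)
  have Bp: "B > 0" unfolding B_def using r2 by (rule sin_gt_zero)
  have Cp: "C > 0" unfolding C_def using r3 by (rule sin_gt_zero)
  have Dp: "D > 0" unfolding D_def using r4 by (rule sin_gt_zero)
  have Mdef: "M = (A*B*C*D) / (Ab*Bb*Cb*Db)"
    unfolding M_def MM_def aa_def bb_def cc_def dd_def A_def B_def C_def D_def Ab_def Bb_def Cb_def Db_def
      \<sigma>_def by simp
  have Mp: "M > 0" using assms(6) M_def by simp
  have num: "A*B*C*D > 0" using Ap Bp Cp Dp by simp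
  have den: "Ab*Bb*Cb*Db > 0" using Mp num unfolding Mdef by (simp add: zero_less_divide_iff)
  have n1: "\<sigma> - \<alpha> \<noteq> 0" using ne[of "-1" "-1" "-1" 0] sd by auto
  have n2: "\<sigma> - \<alpha> \<noteq> pi" using ne[of "-1" "-1" "-1" "-1"] sd by auto
  have n3: "\<sigma> - \<beta> \<noteq> 0" using ne[of "-1" "1" "1" 0] sd by auto
  have n4: "\<sigma> - \<beta> \<noteq> pi" using ne[of "-1" "1" "1" "1"] sd by auto
  have n5: "\<sigma> - \<gamma> \<noteq> 0" using ne[of "1" "-1" "1" 0] sd by auto
  have n6: "\<sigma> - \<gamma> \<noteq> pi" using ne[of "1" "-1" "1" "1"] sd by auto
  have n7: "\<sigma> - \<delta> \<noteq> 0" using ne[of "1" "1" "-1" 0] sd by auto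
  have n8: "\<sigma> - \<delta> \<noteq> pi" using ne[of "1" "1" "-1" "1"] sd by auto
  have ba: "0 < \<sigma> - \<alpha> \<and> \<sigma> - \<alpha> < pi"
    by (rule key[of _ "\<sigma> - \<beta>" "\<sigma> - \<gamma>" "\<sigma> - \<delta>"]) 
       (use sd r1 r2 r3 r4 n1 n2 den in \<open>simp_all add: Ab_def Bb_def Cb_def Db_def mult_ac\<close>)
  have bb: "0 < \<sigma> - \<beta> \<and> \<sigma> - \<beta> < pi"
    by (rule key[of _ "\<sigma> - \<alpha>" "\<sigma> - \<gamma>" "\<sigma> - \<delta>"]) 
       (use sd r1 r2 r3 r4 n3 n4 den in \<open>simp_all add: Ab_def Bb_def Cb_def Db_def mult_ac\<close>)
  have bc: "0 < \<sigma> - \<gamma> \<and> \<sigma> - \<gamma> < pi"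
    by (rule key[of _ "\<sigma> - \<alpha>" "\<sigma> - \<beta>" "\<sigma> - \<delta>"]) 
       (use sd r1 r2 r3 r4 n5 n6 den in \<open>simp_all add: Ab_def Bb_def Cb_def Db_def mult_ac\<close>)
  have bd: "0 < \<sigma> - \<delta> \<and> \<sigma> - \<delta> < pi"
    by (rule key[of _ "\<sigma> - \<alpha>" "\<sigma> - \<beta>" "\<sigma> - \<gamma>"]) 
       (use sd r1 r2 r3 r4 n7 n8 den in \<open>simp_all add: Ab_def Bb_def Cb_def Db_def mult_ac\<close>)
  have Abp: "Ab > 0" unfolding Ab_def using ba by (intro sin_gt_zero) auto
  have Bbp: "Bb > 0" unfolding Bb_def using bb by (intro sin_gt_zero) auto
  have Cbp: "Cb > 0" unfolding Cb_def using bc by (intro sin_gt_zero) auto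
  have Dbp: "Db > 0" unfolding Db_def using bd by (intro sin_gt_zero) auto
  define S where "S = sin \<sigma>"
  define t1 where "t1 = sin ((\<alpha>+\<delta>-\<beta>-\<gamma>)/2)"
  define t2 where "t2 = sin ((\<alpha>+\<beta>-\<gamma>-\<delta>)/2)"
  define t3 where "t3 = sin ((\<alpha>+\<gamma>-\<beta>-\<delta>)/2)"
  have S0: "S \<noteq> 0"
  proof
    assume "S = 0"
    then have "sin (\<sigma> - pi) = 0" unfolding S_def by (simp add: sin_diff)
    then have "\<sigma> - pi = 0" by (rule sin_eq_0_pi[rotated 2]) (use sd r1 r2 r3 r4 in auto)
    then show False using ne[of 1 1 1 1] sd by auto
  qed
  have t10: "t1 \<noteq> 0"
  proof
    assume "t1 = 0"
    then have "(\<alpha>+\<delta>-\<beta>-\<gamma>)/2 = 0" unfolding t1_def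
      by (rule sin_eq_0_pi[rotated 2]) (use r1 r2 r3 r4 in auto)
    then show False using ne[of "-1" "-1" 1 0] by auto
  qed
  have t20: "t2 \<noteq> 0"
  proof
    assume "t2 = 0"
    then have "(\<alpha>+\<beta>-\<gamma>-\<delta>)/2 = 0" unfolding t2_def
      by (rule sin_eq_0_pi[rotated 2]) (use r1 r2 r3 r4 in auto)
    then show False using ne[of 1 "-1" "-1" 0] by auto
  qed
  have t30: "t3 \<noteq> 0"
  proof
    assume "t3 = 0"
    then have "(\<alpha>+\<gamma>-\<beta>-\<delta>)/2 = 0" unfolding t3_def
      by (rule sin_eq_0_pi[rotated 2]) (use r1 r2 r3 r4 in auto)
    then show False using ne[of "-1" 1 "-1" 0] by auto
  qed
  have pAD: "A*D = (cos (\<alpha>-\<delta>) - cos (\<alpha>+\<delta>))/2" unfolding A_def D_def by (rule ss2) (auto simp: field_simps)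
  have pBC: "B*C = (cos (\<beta>-\<gamma>) - cos (\<beta>+\<gamma>))/2" unfolding B_def C_def by (rule ss2) (auto simp: field_simps)
  have pCD: "C*D = (cos (\<gamma>-\<delta>) - cos (\<gamma>+\<delta>))/2" unfolding C_def D_def by (rule ss2) (auto simp: field_simps)
  have pAB: "A*B = (cos (\<alpha>-\<beta>) - cos (\<alpha>+\<beta>))/2" unfolding A_def B_def by (rule ss2) (auto simp: field_simps)
  have pAC: "A*C = (cos (\<alpha>-\<gamma>) - cos (\<alpha>+\<gamma>))/2" unfolding A_def C_def by (rule ss2) (auto simp: field_simps)
  have pBD: "B*D = (cos (\<beta>-\<delta>) - cos (\<beta>+\<delta>))/2" unfolding B_def D_def by (rule ss2) (auto simp: field_simps)
  have qAD: "Ab*Db = (cos (\<alpha>-\<delta>) - cos (\<beta>+\<gamma>))/2" unfolding Ab_def Db_def by (rule ss2) (use sd in \<open>auto simp: field_simps\<close>)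
  have qBC: "Bb*Cb = (cos (\<beta>-\<gamma>) - cos (\<alpha>+\<delta>))/2" unfolding Bb_def Cb_def by (rule ss2) (use sd in \<open>auto simp: field_simps\<close>)
  have qCD: "Cb*Db = (cos (\<gamma>-\<delta>) - cos (\<alpha>+\<beta>))/2" unfolding Cb_def Db_def by (rule ss2) (use sd in \<open>auto simp: field_simps\<close>)
  have qAB: "Ab*Bb = (cos (\<alpha>-\<beta>) - cos (\<gamma>+\<delta>))/2" unfolding Ab_def Bb_def by (rule ss2) (use sd in \<open>auto simp: field_simps\<close>)
  have qAC: "Ab*Cb = (cos (\<alpha>-\<gamma>) - cos (\<beta>+\<delta>))/2" unfolding Ab_def Cb_def by (rule ss2) (use sd in \<open>auto simp: field_simps\<close>)
  have qBD: "Bb*Db = (cos (\<beta>-\<delta>) - cos (\<alpha>+\<gamma>))/2" unfolding Bb_def Db_def by (rule ss2) (use sd in \<open>auto simp: field_simps\<close>)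
  have St1: "S*t1 = (cos (\<beta>+\<gamma>) - cos (\<alpha>+\<delta>))/2" unfolding S_def t1_def by (rule ss2) (use sd in \<open>auto simp: field_simps\<close>)
  have St2: "S*t2 = (cos (\<gamma>+\<delta>) - cos (\<alpha>+\<beta>))/2" unfolding S_def t2_def by (rule ss2) (use sd in \<open>auto simp: field_simps\<close>)
  have St3: "S*t3 = (cos (\<beta>+\<delta>) - cos (\<alpha>+\<gamma>))/2" unfolding S_def t3_def by (rule ss2) (use sd in \<open>auto simp: field_simps\<close>)
  have t23: "t2*t3 = (cos (\<beta>-\<gamma>) - cos (\<alpha>-\<delta>))/2" unfolding t2_def t3_def by (rule ss2) (auto simp: field_simps)
  have E1: "A*D - Ab*Db = S*t1" unfolding pAD qAD St1 by (simp add: field_simps)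
  have E2: "B*C - Bb*Cb = -(S*t1)" unfolding pBC qBC St1 by (simp add: field_simps)
  have E3: "C*D - Cb*Db = -(S*t2)" unfolding pCD qCD St2 by (simp add: field_simps)
  have E4: "A*B - Ab*Bb = S*t2" unfolding pAB qAB St2 by (simp add: field_simps)
  have E5: "A*C - Ab*Cb = S*t3" unfolding pAC qAC St3 by (simp add: field_simps)
  have E6: "B*D - Bb*Db = -(S*t3)" unfolding pBD qBD St3 by (simp add: field_simps)
  have E7: "Ab*Bb*Cb*Db - A*B*C*D = -(S*t1*(t2*t3))"
  proof -
    have "Ab*Bb*Cb*Db - A*B*C*D = (Ab*Db)*(Bb*Cb) - (A*D)*(B*C)" by (simp add: mult_ac)
    also have "\<dots> = -((S*t1)*(t2*t3))" unfolding qAD qBC pAD pBC St1 t23 by (simp add: field_simps)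
    finally show ?thesis by simp
  qed
  have rdef: "r = (A*D)/(Ab*Db)"
    unfolding r_def rr_def aa_def dd_def A_def D_def Ab_def Db_def \<sigma>_def by simp
  have sdef: "s = (C*D)/(Cb*Db)"
    unfolding s_def ss_def cc_def dd_def C_def D_def Cb_def Db_def \<sigma>_def by simp
  have fdef: "f = (A*C)/(Ab*Cb)"
    unfolding f_def ff_def aa_def cc_def A_def C_def Ab_def Cb_def \<sigma>_def by simp
  have X: "(r - 1) * (r - M) = (S*t1)^2 * (A*D) / ((Ab*Db)^2 * (Bb*Cb))"
  proof -
    have "r - 1 = (A*D - Ab*Db)/(Ab*Db)" unfolding rdef using Abp Dbp by (simp add: field_simps)
    then have "r - 1 = (S*t1)/(Ab*Db)" using E1 by simp
    moreover have "r - M = (A*D)*(S*t1)/((Ab*Db)*(Bb*Cb))"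
    proof -
      have "r - M = (A*D)*(Bb*Cb - B*C)/((Ab*Db)*(Bb*Cb))" unfolding rdef Mdef using Abp Bbp Cbp Dbp by (simp add: field_simps)
      moreover have "Bb*Cb - B*C = S*t1" using E2 by simp
      ultimately show ?thesis by simp
    qed
    ultimately show ?thesis by (simp add: power2_eq_square mult_ac)
  qed
  have Y: "(s - 1) * (s - M) = (S*t2)^2 * (C*D) / ((Cb*Db)^2 * (Ab*Bb))"
  proof -
    have "s - 1 = (C*D - Cb*Db)/(Cb*Db)" unfolding sdef using Cbp Dbp by (simp add: field_simps)
    then have "s - 1 = -(S*t2)/(Cb*Db)" using E3 by simp
    moreover have "s - M = -(C*D)*(S*t2)/((Cb*Db)*(Ab*Bb))"
    proof -
      have "s - M = (C*D)*(Ab*Bb - A*B)/((Cb*Db)*(Ab*Bb))" unfolding sdef Mdef using Abp Bbp Cbp Dbp by (simp add: field_simps)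
      moreover have "Ab*Bb - A*B = -(S*t2)" using E4 by simp
      ultimately show ?thesis by simp
    qed
    ultimately show ?thesis by (simp add: power2_eq_square mult_ac)
  qed
  have Z: "(f - 1) * (f - M) = (S*t3)^2 * (A*C) / ((Ab*Cb)^2 * (Bb*Db))"
  proof -
    have "f - 1 = (A*C - Ab*Cb)/(Ab*Cb)" unfolding fdef using Abp Cbp by (simp add: field_simps)
    then have "f - 1 = (S*t3)/(Ab*Cb)" using E5 by simp
    moreover have "f - M = (A*C)*(S*t3)/((Ab*Cb)*(Bb*Db))"
    proof -
      have "f - M = (A*C)*(Bb*Db - B*D)/((Ab*Cb)*(Bb*Db))" unfolding fdef Mdef using Abp Bbp Cbp Dbp by (simp add: field_simps)
      moreover have "Bb*Db - B*D = S*t3" using E6 by simp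
      ultimately show ?thesis by simp
    qed
    ultimately show ?thesis by (simp add: power2_eq_square mult_ac)
  qed
  have W: "(r - 1) * (s - 1) * (f - 1) * (1 - M) = (S^2*t1*t2*t3)^2 / ((Ab*Db)*(Cb*Db)*(Ab*Cb)*(Ab*Bb*Cb*Db))"
  proof -
    have "r - 1 = (A*D - Ab*Db)/(Ab*Db)" unfolding rdef using Abp Dbp by (simp add: field_simps)
    then have h1: "r - 1 = (S*t1)/(Ab*Db)" using E1 by simp
    have "s - 1 = (C*D - Cb*Db)/(Cb*Db)" unfolding sdef using Cbp Dbp by (simp add: field_simps)
    then have h2: "s - 1 = -(S*t2)/(Cb*Db)" using E3 by simp
    have "f - 1 = (A*C - Ab*Cb)/(Ab*Cb)" unfolding fdef using Abp Cbp by (simp add: field_simps)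
    then have h3: "f - 1 = (S*t3)/(Ab*Cb)" using E5 by simp
    have "1 - M = (Ab*Bb*Cb*Db - A*B*C*D)/(Ab*Bb*Cb*Db)" unfolding Mdef using den Abp Bbp Cbp Dbp by (simp add: diff_divide_distrib)
    then have h4: "1 - M = -(S*t1*(t2*t3))/(Ab*Bb*Cb*Db)" using E7 by simp
    have "(r - 1) * (s - 1) * (f - 1) * (1 - M) = (S*t1)/(Ab*Db) * (-(S*t2)/(Cb*Db)) * ((S*t3)/(Ab*Cb)) * (-(S*t1*(t2*t3))/(Ab*Bb*Cb*Db))"
      by (simp only: h1 h2 h3 h4)
    also have "\<dots> = (S^2*t1*t2*t3)^2 / ((Ab*Db)*(Cb*Db)*(Ab*Cb)*(Ab*Bb*Cb*Db))"
      by (simp add: power2_eq_square mult_ac)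
    finally show ?thesis .
  qed
  have sq: "(S*t1)^2 > 0" "(S*t2)^2 > 0" "(S*t3)^2 > 0" "(S^2*t1*t2*t3)^2 > 0"
    using S0 t10 t20 t30 by auto
  have rp: "r > 0" unfolding rdef using Ap Dp Abp Dbp by simp
  have sp: "s > 0" unfolding sdef using Cp Dp Cbp Dbp by simp
  have fp: "f > 0" unfolding fdef using Ap Cp Abp Cbp by simp
  have Xp: "(r - 1) * (r - M) > 0" unfolding X using sq Ap Dp Abp Bbp Cbp Dbp by simp
  have Yp: "(s - 1) * (s - M) > 0" unfolding Y using sq Cp Dp Abp Bbp Cbp Dbp by simp
  have Zp: "(f - 1) * (f - M) > 0" unfolding Z using sq Ap Cp Abp Bbp Cbp Dbp by simp
  have Wp: "(r - 1) * (s - 1) * (f - 1) * (1 - M) > 0" unfolding W using sq Abp Bbp Cbp Dbp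
    by (intro divide_pos_pos) auto
  show ?thesis using ba bb bc bd rp sp fp Xp Yp Zp Wp by simp
qed

end
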